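(* Let $\Omega>0$ denote the maximum absolute value of the stored quantities, let $C$ be the column index of a Boolean scalar (stored as $X[1,C]\in\{0,1\}$) in $X\in\mathbb{R}^{K\times d}$, and let $D,E$ be column indices of two columns all of whose entries are Boolean. Then there exists a single transformer layer that simulates the repeat-AND operation $X[i,D]\leftarrow X[1,C]\wedge X[i,D]\wedge\neg X[i,E]$ for all $i\in\{2,3,\dots,K\}$.
   Context: Conventions: rows/columns indexed from $1$; $X[i,j]$ is the $(i,j)$ entry. $\wedge,\neg$ are logical AND and NOT on $\{0,1\}$. $\phi(x)=\max\{x,0\}$ entrywise. Hardmax $\sigma$: row $i$ of $\sigma(\Phi)$ is $\frac{1}{|S_i|}\sum_{k\in S_i}e_k$, $S_i=\{k:\Phi_{ik}=\max_j\Phi_{ij}\}$. For a weighted hypergraph with incident matrix $A\in\mathbb{R}^{n_v\times n_e}$ ($A_{ij}=w(e_j)$ if vertex $v_i\in e_j$, else $0$) and $K\ge\max\{n_v,n_e\}+1$, the padded incident matrix $\widetilde A\in\mathbb{R}^{K\times K}$ has $\widetilde A_{i+1,j+1}=A_{ij}$, zeros elsewhere. A transformer layer on $X\in\mathbb{R}^{K\times d}$ is $f(X,\widetilde A)=f_{\mathrm{mlp}}(f_{\mathrm{attn}}(X,\widetilde A))$, $f_{\mathrm{attn}}(X,\widetilde A)=\sum_{i\in M_A}\psi^{(i)}(X,\widetilde A)+\sum_{i\in M_{A^\top}}\psi^{(i)}(X,\widetilde A^\top)+\sum_{i\in M}\psi^{(i)}(X,I_K)+X$, $\psi(X,B)=B\,\sigma(XW_QW_K^\top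 X^\top)XW_V$ ($W_Q,W_K\in\mathbb{R}^{d\times2}$, $W_V\in\mathbb{R}^{d\times d}$), $f_{\mathrm{mlp}}(X)=Z^{(4)}W^{(4)}+X$, $Z^{(1)}=X$, $Z^{(j+1)}=\phi(Z^{(j)}W^{(j)})$ ($j=1,2,3$). Storage convention: scalars in the top row of a column (rest $0$), arrays of length $K-1$ in rows $2,\dots,K$ (top $0$); designated columns $B_{\mathrm{global}}$ (top $1$, rest $0$), $B_{\mathrm{local}}$ (top $0$, rest $1$), and scratchpad columns. "Simulating an operation" means the layer's weights can be chosen so that applying it to $X$ performs the stated update. *)

theory Defs
  imports "Jordan_Normal_Form.Matrix"
begin

text \<open>Matrices are Jordan_Normal_Form matrices, indexed from 0.
  Paper row/column index r corresponds to index r-1 here.\<close>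

definition relu_mat :: "real mat \<Rightarrow> real mat" where
  "relu_mat M = map_mat (\<lambda>x. max x 0) M"

definition hardmax :: "real mat \<Rightarrow> real mat" where
  "hardmax P = mat (dim_row P) (dim_col P)
     (\<lambda>(i,j). let S = {k. k < dim_col P \<and> P $$ (i,k) = Max {P $$ (i,l) | l. l < dim_col P}}
             in if j \<in> S then 1 / real (card S) else 0)"

type_synonym head = "real mat \<times> real mat \<times> real mat"

definition psi :: "real mat \<Rightarrow> real mat \<Rightarrow> head \<Rightarrow> real mat" where
  "psi X B h = (case h of (WQ, WK, WV) \<Rightarrow>
      B * hardmax (X * WQ * transpose_mat WK * transpose_mat X) * X * WV)"

record tlayer =
  headsA  :: "head list"
  headsAT :: "head list"
  headsI  :: "head list"
  W1 :: "real mat"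
  W2 :: "real mat"
  W3 :: "real mat"
  W4 :: "real mat"

definition wf_head :: "nat \<Rightarrow> head \<Rightarrow> bool" where
  "wf_head d h = (case h of (WQ, WK, WV) \<Rightarrow>
      WQ \<in> carrier_mat d 2 \<and> WK \<in> carrier_mat d 2 \<and> WV \<in> carrier_mat d d)"

definition wf_layer :: "nat \<Rightarrow> tlayer \<Rightarrow> bool" where
  "wf_layer d T = ((\<forall>h \<in> set (headsA T) \<union> set (headsAT T) \<union> set (headsI T). wf_head d h) \<and>
     (\<exists>m1 m2 m3. W1 T \<in> carrier_mat d m1 \<and> W2 T \<in> carrier_mat m1 m2 \<and>
                 W3 T \<in> carrier_mat m2 m3 \<and> W4 T \<in> carrier_mat m3 d))"

definition f_attn :: "tlayer \<Rightarrow> real mat \<Rightarrow> real mat \<Rightarrow> real mat" where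
  "f_attn T X At =
     foldr (\<lambda>h acc. psi X At h + acc) (headsA T)
       (foldr (\<lambda>h acc. psi X (transpose_mat At) h + acc) (headsAT T)
         (foldr (\<lambda>h acc. psi X (1\<^sub>m (dim_row X)) h + acc) (headsI T) X))"

definition f_mlp :: "tlayer \<Rightarrow> real mat \<Rightarrow> real mat" where
  "f_mlp T X = relu_mat (relu_mat (relu_mat (X * W1 T) * W2 T) * W3 T) * W4 T + X"

definition layer_apply :: "tlayer \<Rightarrow> real mat \<Rightarrow> real mat \<Rightarrow> real mat" where
  "layer_apply T X At = f_mlp T (f_attn T X At)"

text \<open>Padded incidence matrix (K x K) of a weighted hypergraph with nv vertices and ne edges,
  vertex membership given by mem, edge weights w.\<close>
definition is_padded_incidence :: "nat \<Rightarrow> real mat \<Rightarrow> bool" where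
  "is_padded_incidence K At =
     (\<exists>nv ne (mem :: nat \<Rightarrow> nat \<Rightarrow> bool) (w :: nat \<Rightarrow> real).
        K \<ge> max nv ne + 1 \<and> At \<in> carrier_mat K K \<and>
        (\<forall>i<K. \<forall>j<K. At $$ (i,j) =
            (if 1 \<le> i \<and> i \<le> nv \<and> 1 \<le> j \<and> j \<le> ne \<and> mem (i-1) (j-1) then w (j-1) else 0)))"

definition band :: "real \<Rightarrow> real \<Rightarrow> real" where
  "band x y = (if x = 1 \<and> y = 1 then 1 else 0)"

definition bnot :: "real \<Rightarrow> real" where
  "bnot x = (if x = 1 then 0 else 1)"

end

theory Submission imports Defs begin

lemma mult_entry:
  fixes A B :: "'a::comm_semiring_0 mat"
  assumes "A \<in> carrier_mat n m" "B \<in> carrier_mat m p" "i < n" "j < p"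
  shows "(A*B)$$(i,j) = (\<Sum>k<m. A$$(i,k) * B$$(k,j))"
  using assms by (auto simp: scalar_prod_def lessThan_atLeast0 intro!: sum.cong)

lemma sum_ind: "a < (d::nat) \<Longrightarrow> (\<Sum>r<d. (y r::real) * (if r = a then 1 else 0)) = y a"
  by (simp add: if_distrib[of "\<lambda>x. _ * x"] cong: if_cong)

lemma hardmax_zero: "hardmax (0\<^sub>m K K) = mat K K (\<lambda>_. 1 / real K)"
proof (cases "K = 0")
  case True thus ?thesis by (auto simp: hardmax_def)
next
  case False
  have "{(0\<^sub>m K K :: real mat) $$ (i, l) |l. l < K} = {(0::real)}" if "i < K" for i using False that by (auto intro!: exI[of _ i])
  note h = this
  have m: "Max {(0\<^sub>m K K :: real mat) $$ (i, l) |l. l < K} = (0::real)" if "i < K" for i by (subst h[OF that]) simp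
  have "{k. k < K \<and> (0\<^sub>m K K :: real mat) $$ (i, k) = Max {(0\<^sub>m K K :: real mat) $$ (i, l) |l. l < K}} = {..<K}" if "i < K" for i
    using that m[OF that] by auto
  thus ?thesis unfolding hardmax_def by (intro eq_matI) (auto simp: Let_def m)
qed


lemma sum_ind_gen: "a < (d::nat) \<Longrightarrow> (\<Sum>r<d. (y r::real) * (if r = a then c else 0)) = c * y a"
  by (simp add: if_distrib[of "\<lambda>x. _ * x"] cong: if_cong)

lemma relu_relu: "relu_mat (relu_mat M) = relu_mat M"
  by (intro eq_matI) (auto simp: relu_mat_def)

lemma relu_dim[simp]: "dim_row (relu_mat M) = dim_row M" "dim_col (relu_mat M) = dim_col M"
  by (auto simp: relu_mat_def)

lemma relu_idx[simp]: "i < dim_row M \<Longrightarrow> j < dim_col M \<Longrightarrow> relu_mat M $$ (i,j) = max (M $$ (i,j)) 0"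
  by (auto simp: relu_mat_def)

lemma attn_part:
  fixes X :: "real mat"
  assumes X: "X \<in> carrier_mat K d" and C: "C < d"
    and XC: "\<forall>i. 1 \<le> i \<and> i < K \<longrightarrow> X $$ (i,C) = 0"
  shows "1\<^sub>m K * hardmax (X * 0\<^sub>m d 2 * transpose_mat (0\<^sub>m d 2) * transpose_mat X) * X
           * mat d d (\<lambda>(r,s). if r = C \<and> s = C then real K else 0)
         = mat K d (\<lambda>(i,j). if j = C then X $$ (0,C) else 0)"
proof -
  have z: "X * 0\<^sub>m d 2 * transpose_mat (0\<^sub>m d 2) * transpose_mat X = (0\<^sub>m K K :: real mat)"
    using X by simp
  define H :: "real mat" where "H = mat K K (\<lambda>_. 1 / real K)"
  have H: "H \<in> carrier_mat K K" by (simp add: H_def)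
  have sumX: "(\<Sum>k<K. X $$ (k, C)) = X $$ (0, C)" if "0 < K"
  proof -
    have "(\<Sum>k<K. X $$ (k, C)) = (\<Sum>k<K. if k = 0 then X $$ (0, C) else 0)"
      using XC by (intro sum.cong) auto
    also have "\<dots> = X $$ (0,C)" using that by simp
    finally show ?thesis .
  qed
  have "H * X * mat d d (\<lambda>(r,s). if r = C \<and> s = C then real K else 0)
         = mat K d (\<lambda>(i,j). if j = C then X $$ (0,C) else 0)"
  proof (intro eq_matI)
    fix i j assume i: "i < dim_row (mat K d (\<lambda>(i,j). if j = C then X $$ (0,C) else 0))"
      and j: "j < dim_col (mat K d (\<lambda>(i,j). if j = C then X $$ (0,C) else 0))"
    have i': "i < K" and j': "j < d" using i j by auto
    have HX: "H * X \<in> carrier_mat K d" using H X by auto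
    have e1: "(H * X) $$ (i, r) = (\<Sum>k<K. 1 / real K * X $$ (k, r))" if "r < d" for r
      using mult_entry[OF H X i' that] i' by (simp add: H_def)
    have "(H * X * mat d d (\<lambda>(r,s). if r = C \<and> s = C then real K else 0)) $$ (i,j)
        = (\<Sum>r<d. (H * X) $$ (i, r) * (if r = C then (if j = C then real K else 0) else 0))"
      using mult_entry[OF HX _ i' j', of "mat d d (\<lambda>(r,s). if r = C \<and> s = C then real K else 0)"] j'
      by (auto intro!: sum.cong)
    also have "\<dots> = (if j = C then real K else 0) * (H * X) $$ (i, C)"
      using C by (rule sum_ind_gen)
    also have "\<dots> = (if j = C then X $$ (0,C) else 0)"
      using e1[OF C] sumX i' by (auto simp: sum_divide_distrib[symmetric])
    finally show "(H * X * mat d d (\<lambda>(r,s). if r = C \<and> s = C then real K else 0)) $$ (i,j)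
        = mat K d (\<lambda>(i,j). if j = C then X $$ (0,C) else 0) $$ (i,j)" using i' j' by simp
  qed (auto simp: H_def)
  thus ?thesis unfolding z hardmax_zero H_def[symmetric] using H by simp
qed


definition w1f :: "nat \<Rightarrow> nat \<Rightarrow> nat \<Rightarrow> nat \<Rightarrow> nat \<Rightarrow> nat \<times> nat \<Rightarrow> real" where
  "w1f C D E G L = (\<lambda>(r,q). if q = 0 then (if r = C then 1 else 0) + (if r = D then 1 else 0)
       + (if r = E then (if E \<noteq> C then -1 else 0) else 0) + (if r = G then -3 else 0) + (if r = L then -1 else 0)
     else if q = 1 then (if r = D then 1 else 0) + (if r = G then -1 else 0)
     else (if r = C then 1 else 0) + (if r = G then -1 else 0))"

definition w4f :: "nat \<Rightarrow> nat \<Rightarrow> nat \<times> nat \<Rightarrow> real" where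
  "w4f C D = (\<lambda>(q,j). if q = 0 then (if j = D then 1 else 0) else if q = 1 then (if j = D then -1 else 0)
     else (if j = C then -1 else 0))"

lemma mlp_part:
  fixes Y :: "real mat"
  assumes Y: "Y \<in> carrier_mat K d" and lt: "C < d" "D < d" "E < d" "G < d" "L < d"
    and i: "i < K" and j: "j < d"
  shows "(relu_mat (relu_mat (relu_mat (Y * mat d 3 (w1f C D E G L)) * 1\<^sub>m 3) * 1\<^sub>m 3) * mat 3 d (w4f C D) + Y) $$ (i,j)
    = Y $$ (i,j)
      + (if j = D then max (Y $$ (i,C) + Y $$ (i,D) + (if E \<noteq> C then -1 else 0) * Y $$ (i,E) + -3 * Y $$ (i,G) + -1 * Y $$ (i,L)) 0
                     - max (Y $$ (i,D) + -1 * Y $$ (i,G)) 0 else 0)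
      - (if j = C then max (Y $$ (i,C) + -1 * Y $$ (i,G)) 0 else 0)"
proof -
  define M where "M = Y * mat d 3 (w1f C D E G L)"
  have M: "M \<in> carrier_mat K 3" using Y by (simp add: M_def)
  have red: "relu_mat (relu_mat (relu_mat M * 1\<^sub>m 3) * 1\<^sub>m 3) = relu_mat M"
    using M by (simp add: relu_relu)
  have Me: "M $$ (i,q) = (\<Sum>r<d. Y $$ (i,r) * w1f C D E G L (r,q))" if "q < 3" for q
  proof -
    have B1: "mat d 3 (w1f C D E G L) \<in> carrier_mat d 3" by simp
    have "M $$ (i,q) = (\<Sum>r<d. Y $$ (i,r) * mat d 3 (w1f C D E G L) $$ (r,q))"
      unfolding M_def by (rule mult_entry[OF Y B1 i that])
    also have "\<dots> = (\<Sum>r<d. Y $$ (i,r) * w1f C D E G L (r,q))"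
      using that by (intro sum.cong refl) simp
    finally show ?thesis .
  qed
  have M0: "M $$ (i,0) = Y $$ (i,C) + Y $$ (i,D) + (if E \<noteq> C then -1 else 0) * Y $$ (i,E) + -3 * Y $$ (i,G) + -1 * Y $$ (i,L)"
    using Me[of 0] lt by (simp add: w1f_def distrib_left sum.distrib sum_ind_gen)
  have M1: "M $$ (i,1) = Y $$ (i,D) + -1 * Y $$ (i,G)"
    using Me[of 1] lt by (simp add: w1f_def distrib_left sum.distrib sum_ind_gen)
  have M2: "M $$ (i,2) = Y $$ (i,C) + -1 * Y $$ (i,G)"
    using Me[of 2] lt by (simp add: w1f_def distrib_left sum.distrib sum_ind_gen)
  have RM: "relu_mat M \<in> carrier_mat K 3" using M unfolding carrier_mat_def by simp
  have B4: "mat 3 d (w4f C D) \<in> carrier_mat 3 d" by simp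
  have "(relu_mat M * mat 3 d (w4f C D)) $$ (i,j) = (\<Sum>q<3. relu_mat M $$ (i,q) * mat 3 d (w4f C D) $$ (q,j))"
    by (rule mult_entry[OF RM B4 i j])
  also have "\<dots> = (\<Sum>q<3. relu_mat M $$ (i,q) * w4f C D (q,j))"
    using j by (intro sum.cong refl) simp
  also have "\<dots> = max (M $$ (i,0)) 0 * w4f C D (0,j) + max (M $$ (i,1)) 0 * w4f C D (1,j) + max (M $$ (i,2)) 0 * w4f C D (2,j)"
    using M i by (simp add: numeral_3_eq_3 lessThan_Suc numeral_2_eq_2)
  finally have e: "(relu_mat M * mat 3 d (w4f C D)) $$ (i,j) = \<dots>" .
  show ?thesis unfolding M_def[symmetric] red using e i j Y RM M0 M1 M2
    by (simp add: w4f_def)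
qed


lemma relu_zero[simp]: "relu_mat (0\<^sub>m n m) = 0\<^sub>m n m"
  by (intro eq_matI) (auto simp: relu_mat_def)

theorem lemmaC9:
  fixes K d C D E G L :: nat and \<Omega> :: real
  assumes "\<Omega> > 0"
    and "C < d" and "D < d" and "E < d" and "G < d" and "L < d"
    and "G \<noteq> L" and "C \<notin> {G, L}" and "D \<notin> {G, L}" and "E \<notin> {G, L}"
  shows "\<exists>T. wf_layer d T \<and>
    (\<forall>X At. X \<in> carrier_mat K d \<longrightarrow> is_padded_incidence K At \<longrightarrow>
       (\<forall>i<K. \<forall>j<d. \<bar>X $$ (i,j)\<bar> \<le> \<Omega>) \<longrightarrow>
       (\<forall>i<K. X $$ (i,G) = (if i = 0 then 1 else 0)) \<longrightarrow>
       (\<forall>i<K. X $$ (i,L) = (if i = 0 then 0 else 1)) \<longrightarrow>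
       X $$ (0,C) \<in> {0,1} \<longrightarrow> (\<forall>i. 1 \<le> i \<and> i < K \<longrightarrow> X $$ (i,C) = 0) \<longrightarrow>
       (\<forall>i<K. X $$ (i,D) \<in> {0,1} \<and> X $$ (i,E) \<in> {0,1}) \<longrightarrow>
       layer_apply T X At =
         mat K d (\<lambda>(i,j). if j = D \<and> 1 \<le> i
                           then band (X $$ (0,C)) (band (X $$ (i,D)) (bnot (X $$ (i,E))))
                           else X $$ (i,j)))"
proof (cases "C = D")
  case True
  define T :: tlayer where "T = \<lparr>headsA = [], headsAT = [], headsI = [],
     W1 = 0\<^sub>m d 1, W2 = 0\<^sub>m 1 1, W3 = 0\<^sub>m 1 1, W4 = 0\<^sub>m 1 d\<rparr>"
  have wf: "wf_layer d T" unfolding wf_layer_def T_def by (auto intro!: exI[of _ 1])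
  show ?thesis
  proof (intro exI[of _ T] conjI wf allI impI)
    fix X At :: "real mat"
    assume X: "X \<in> carrier_mat K d"
      and XC: "\<forall>i. 1 \<le> i \<and> i < K \<longrightarrow> X $$ (i,C) = 0"
    have "layer_apply T X At = X"
      using X unfolding layer_apply_def f_attn_def f_mlp_def T_def by simp
    also have "\<dots> = mat K d (\<lambda>(i,j). if j = D \<and> 1 \<le> i
                           then band (X $$ (0,C)) (band (X $$ (i,D)) (bnot (X $$ (i,E))))
                           else X $$ (i,j))"
      using X XC True by (intro eq_matI) (auto simp: band_def)
    finally show "layer_apply T X At = mat K d (\<lambda>(i,j). if j = D \<and> 1 \<le> i
                           then band (X $$ (0,C)) (band (X $$ (i,D)) (bnot (X $$ (i,E))))
                           else X $$ (i,j))" .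
  qed
next
  case CD: False
  define WV :: "real mat" where "WV = mat d d (\<lambda>(r,s). if r = C \<and> s = C then real K else 0)"
  define T :: tlayer where "T = \<lparr>headsA = [], headsAT = [], headsI = [(0\<^sub>m d 2, 0\<^sub>m d 2, WV)],
     W1 = mat d 3 (w1f C D E G L), W2 = 1\<^sub>m 3, W3 = 1\<^sub>m 3, W4 = mat 3 d (w4f C D)\<rparr>"
  have wf: "wf_layer d T" unfolding wf_layer_def T_def wf_head_def WV_def by (auto intro!: exI[of _ 3])
  show ?thesis
  proof (intro exI[of _ T] conjI wf allI impI)
    fix X At :: "real mat"
    assume X: "X \<in> carrier_mat K d"
      and XG: "\<forall>i<K. X $$ (i,G) = (if i = 0 then 1 else 0)"
      and XL: "\<forall>i<K. X $$ (i,L) = (if i = 0 then 0 else 1)"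
      and c01: "X $$ (0,C) \<in> {0,1}"
      and XC: "\<forall>i. 1 \<le> i \<and> i < K \<longrightarrow> X $$ (i,C) = 0"
      and DE: "\<forall>i<K. X $$ (i,D) \<in> {0,1} \<and> X $$ (i,E) \<in> {0,1}"
    define Y where "Y = mat K d (\<lambda>(i,j). if j = C then X $$ (0,C) else 0) + X"
    have Y: "Y \<in> carrier_mat K d" using X by (simp add: Y_def)
    have Ye: "Y $$ (i,j) = X $$ (i,j) + (if j = C then X $$ (0,C) else 0)" if "i < K" "j < d" for i j
      using that X by (simp add: Y_def)
    have att: "f_attn T X At = Y"
      using X attn_part[OF X assms(2) XC]
      unfolding f_attn_def T_def Y_def psi_def WV_def by simp
    show "layer_apply T X At = mat K d (\<lambda>(i,j). if j = D \<and> 1 \<le> i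
                           then band (X $$ (0,C)) (band (X $$ (i,D)) (bnot (X $$ (i,E))))
                           else X $$ (i,j))"
    proof (intro eq_matI)
      fix i j assume "i < dim_row (mat K d (\<lambda>(i,j). if j = D \<and> 1 \<le> i
                           then band (X $$ (0,C)) (band (X $$ (i,D)) (bnot (X $$ (i,E))))
                           else X $$ (i,j)))"
        "j < dim_col (mat K d (\<lambda>(i,j). if j = D \<and> 1 \<le> i
                           then band (X $$ (0,C)) (band (X $$ (i,D)) (bnot (X $$ (i,E))))
                           else X $$ (i,j)))"
      hence i: "i < K" and j: "j < d" by auto
      have lhs: "layer_apply T X At $$ (i,j) = Y $$ (i,j)
      + (if j = D then max (Y $$ (i,C) + Y $$ (i,D) + (if E \<noteq> C then -1 else 0) * Y $$ (i,E) + -3 * Y $$ (i,G) + -1 * Y $$ (i,L)) 0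
                     - max (Y $$ (i,D) + -1 * Y $$ (i,G)) 0 else 0)
      - (if j = C then max (Y $$ (i,C) + -1 * Y $$ (i,G)) 0 else 0)"
        unfolding layer_apply_def att using mlp_part[OF Y assms(2-6) i j]
        by (simp add: f_mlp_def T_def)
      have yc: "Y $$ (i,C) = X $$ (i,C) + X $$ (0,C)" using Ye[OF i assms(2)] by simp
      have yd: "Y $$ (i,D) = X $$ (i,D)" using Ye[OF i assms(3)] CD by simp
      have ye: "Y $$ (i,E) = X $$ (i,E) + (if E = C then X $$ (0,C) else 0)" using Ye[OF i assms(4)] by simp
      have yg: "Y $$ (i,G) = X $$ (i,G)" using Ye[OF i assms(5)] assms(8) by simp
      have yl: "Y $$ (i,L) = X $$ (i,L)" using Ye[OF i assms(6)] assms(8) by simp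
      have yj: "Y $$ (i,j) = X $$ (i,j) + (if j = C then X $$ (0,C) else 0)" using Ye[OF i j] .
      have g: "X $$ (i,G) = (if i = 0 then 1 else 0)" and l: "X $$ (i,L) = (if i = 0 then 0 else 1)"
        using XG XL i by auto
      have d01: "X $$ (i,D) \<in> {0,1}" and e01: "X $$ (i,E) \<in> {0,1}" using DE i by auto
      have xc: "i \<noteq> 0 \<Longrightarrow> X $$ (i,C) = 0" using XC i by auto
      show "layer_apply T X At $$ (i,j) = mat K d (\<lambda>(i,j). if j = D \<and> 1 \<le> i
                           then band (X $$ (0,C)) (band (X $$ (i,D)) (bnot (X $$ (i,E))))
                           else X $$ (i,j)) $$ (i,j)"
        unfolding lhs yc yd ye yg yl yj g l using i j c01 d01 e01 xc CD
        by (cases "i = 0"; cases "E = C"; auto simp: band_def bnot_def)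
    qed (use Y in \<open>auto simp: layer_apply_def att f_mlp_def\<close>)
  qed
qed

end
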